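(* Let $\mathfrak g$ be a Lie algebra over $\mathbb F$ ($\mathbb F=\mathbb R$ or $\mathbb C$) with center $\mathfrak z(\mathfrak g)$, let $c\in\mathbb F$, let $R$ be a linear endomorphism of $\mathfrak g$, and let $\mathcal R$ be the endomorphism of $\mathfrak g\times\mathfrak g$ defined by $\mathcal R(x,y)=\big(R(x-y)+cy,\;R(x-y)+cx\big)$. Then $\mathcal R$ is an $R$-matrix of the Lie algebra $\mathfrak g\times\mathfrak g$ (with componentwise bracket) if and only if $$B_R(x,y)+c^2[x,y]\in\mathfrak z(\mathfrak g)\qquad\text{for all }x,y\in\mathfrak g.$$ In particular, if $\mathfrak g$ is a complex semisimple Lie algebra, $\mathcal R$ is an $R$-matrix of $\mathfrak g\times\mathfrak g$ if and only if $R$ satisfies the modified classical Yang–Baxter equation of constant $c$.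
   Context: For a Lie algebra $\mathfrak a$ and a linear endomorphism $S$ of $\mathfrak a$, put $[x,y]_S=\tfrac12([Sx,y]+[x,Sy])$ and $B_S(x,y)=[Sx,Sy]-S([Sx,y]+[x,Sy])$. $S$ is called an $R$-matrix of $\mathfrak a$ if $[\cdot,\cdot]_S$ is a Lie bracket on $\mathfrak a$. $S$ satisfies the modified classical Yang–Baxter equation (mCYBE) of constant $c$ if $B_S(x,y)=-c^2[x,y]$ for all $x,y\in\mathfrak a$. The Lie algebra $\mathfrak g\times\mathfrak g$ carries the bracket $[(x,y),(z,s)]=([x,z],[y,s])$. *)

theory Defs
  imports Complex_Main "HOL-Library.Product_Plus"
begin

definition lie_algebra :: "('k::field \<Rightarrow> 'a::ab_group_add \<Rightarrow> 'a) \<Rightarrow> ('a \<Rightarrow> 'a \<Rightarrow> 'a) \<Rightarrow> bool" where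
  "lie_algebra scale br \<longleftrightarrow>
     Vector_Spaces.vector_space scale \<and>
     (\<forall>y. Vector_Spaces.linear scale scale (\<lambda>x. br x y)) \<and>
     (\<forall>x. Vector_Spaces.linear scale scale (\<lambda>y. br x y)) \<and>
     (\<forall>x. br x x = 0) \<and>
     (\<forall>x y z. br x (br y z) + br y (br z x) + br z (br x y) = 0)"

definition lie_center :: "('a::ab_group_add \<Rightarrow> 'a \<Rightarrow> 'a) \<Rightarrow> 'a set" where
  "lie_center br = {z. \<forall>x. br z x = 0}"

definition bracketS :: "('k::field \<Rightarrow> 'a::ab_group_add \<Rightarrow> 'a) \<Rightarrow> ('a \<Rightarrow> 'a \<Rightarrow> 'a) \<Rightarrow> ('a \<Rightarrow> 'a) \<Rightarrow> 'a \<Rightarrow> 'a \<Rightarrow> 'a" where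
  "bracketS scale br S x y = scale (1/2) (br (S x) y + br x (S y))"

definition BS :: "('a::ab_group_add \<Rightarrow> 'a \<Rightarrow> 'a) \<Rightarrow> ('a \<Rightarrow> 'a) \<Rightarrow> 'a \<Rightarrow> 'a \<Rightarrow> 'a" where
  "BS br S x y = br (S x) (S y) - S (br (S x) y + br x (S y))"

definition is_R_matrix :: "('k::field \<Rightarrow> 'a::ab_group_add \<Rightarrow> 'a) \<Rightarrow> ('a \<Rightarrow> 'a \<Rightarrow> 'a) \<Rightarrow> ('a \<Rightarrow> 'a) \<Rightarrow> bool" where
  "is_R_matrix scale br S \<longleftrightarrow> lie_algebra scale (bracketS scale br S)"

definition mCYBE :: "('k::field \<Rightarrow> 'a::ab_group_add \<Rightarrow> 'a) \<Rightarrow> ('a \<Rightarrow> 'a \<Rightarrow> 'a) \<Rightarrow> ('a \<Rightarrow> 'a) \<Rightarrow> 'k \<Rightarrow> bool" where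
  "mCYBE scale br S c \<longleftrightarrow> (\<forall>x y. BS br S x y = scale (- (c^2)) (br x y))"

definition prod_scale :: "('k \<Rightarrow> 'a \<Rightarrow> 'a) \<Rightarrow> 'k \<Rightarrow> 'a \<times> 'a \<Rightarrow> 'a \<times> 'a" where
  "prod_scale scale a p = (scale a (fst p), scale a (snd p))"

definition prod_br :: "('a \<Rightarrow> 'a \<Rightarrow> 'a) \<Rightarrow> 'a \<times> 'a \<Rightarrow> 'a \<times> 'a \<Rightarrow> 'a \<times> 'a" where
  "prod_br br p q = (br (fst p) (fst q), br (snd p) (snd q))"

definition calR :: "('k \<Rightarrow> 'a::ab_group_add \<Rightarrow> 'a) \<Rightarrow> ('a \<Rightarrow> 'a) \<Rightarrow> 'k \<Rightarrow> 'a \<times> 'a \<Rightarrow> 'a \<times> 'a" where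
  "calR scale R c p = (R (fst p - snd p) + scale c (snd p), R (fst p - snd p) + scale c (fst p))"

definition lie_ideal :: "('k::field \<Rightarrow> 'a::ab_group_add \<Rightarrow> 'a) \<Rightarrow> ('a \<Rightarrow> 'a \<Rightarrow> 'a) \<Rightarrow> 'a set \<Rightarrow> bool" where
  "lie_ideal scale br I \<longleftrightarrow> module.subspace scale I \<and> (\<forall>x y. y \<in> I \<longrightarrow> br x y \<in> I)"

fun derived_series :: "('k::field \<Rightarrow> 'a::ab_group_add \<Rightarrow> 'a) \<Rightarrow> ('a \<Rightarrow> 'a \<Rightarrow> 'a) \<Rightarrow> 'a set \<Rightarrow> nat \<Rightarrow> 'a set" where
  "derived_series scale br I 0 = I"
| "derived_series scale br I (Suc n) =
     module.span scale {br x y | x y. x \<in> derived_series scale br I n \<and> y \<in> derived_series scale br I n}"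

definition lie_solvable :: "('k::field \<Rightarrow> 'a::ab_group_add \<Rightarrow> 'a) \<Rightarrow> ('a \<Rightarrow> 'a \<Rightarrow> 'a) \<Rightarrow> 'a set \<Rightarrow> bool" where
  "lie_solvable scale br I \<longleftrightarrow> (\<exists>n. derived_series scale br I n = {0})"

definition semisimple :: "('k::field \<Rightarrow> 'a::ab_group_add \<Rightarrow> 'a) \<Rightarrow> ('a \<Rightarrow> 'a \<Rightarrow> 'a) \<Rightarrow> bool" where
  "semisimple scale br \<longleftrightarrow> lie_algebra scale br \<and>
     (\<exists>B. finite B \<and> module.span scale B = UNIV) \<and>
     (\<forall>I. lie_ideal scale br I \<and> lie_solvable scale br I \<longrightarrow> I = {0})"

end

theory Submission
  imports Defs
begin

locale LA = vector_space scale for scale :: "'k::field_char_0 \<Rightarrow> 'a::ab_group_add \<Rightarrow> 'a" +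
  fixes br :: "'a \<Rightarrow> 'a \<Rightarrow> 'a"
  assumes addL: "br (a + b) y = br a y + br b y"
    and sclL: "br (scale r a) y = scale r (br a y)"
    and addR: "br x (a + b) = br x a + br x b"
    and sclR: "br x (scale r b) = scale r (br x b)"
    and alt: "br x x = 0"
    and jac: "br x (br y z) + br y (br z x) + br z (br x y) = 0"

lemma LA_iff: "lie_algebra scale br \<longleftrightarrow> LA scale br"
  unfolding lie_algebra_def LA_def LA_axioms_def Vector_Spaces.linear_iff by auto

context LA
begin

lemma zeroL[simp]: "br 0 y = 0"
  using addL[of 0 0 y] by simp
lemma zeroR[simp]: "br x 0 = 0"
  using addR[of x 0 0] by simp
lemma sm1: "scale (-1) v = - v"
  by (simp only: scale_minus_left scale_one)
lemma negL: "br (- a) y = - br a y"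
  using sclL[of "-1" a y] by (simp only: sm1)
lemma negR: "br x (- a) = - br x a"
  using sclR[of x "-1" a] by (simp only: sm1)
lemma diffL: "br (a - b) y = br a y - br b y"
  by (simp only: diff_conv_add_uminus addL negL)
lemma diffR: "br x (a - b) = br x a - br x b"
  by (simp only: diff_conv_add_uminus addR negR)

lemmas brs = addL sclL addR sclR negL negR diffL diffR

lemma antisym: "br a b = - br b a"
proof -
  have "br a a + br b a + (br a b + br b b) = 0" using alt[of "a+b"] unfolding addL addR .
  then have "br a b + br b a = 0" by (simp add: alt add.commute)
  then show ?thesis by (simp add: eq_neg_iff_add_eq_0)
qed

lemma jac2: "br (br a b) c + br (br b c) a + br (br c a) b = 0"
proof -
  have "br c (br a b) + br a (br b c) + br b (br c a) = 0" by (rule jac)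
  then have "- br (br a b) c + - br (br b c) a + - br (br c a) b = 0"
    using antisym[of c "br a b"] antisym[of a "br b c"] antisym[of b "br c a"] by simp
  then have "- (br (br a b) c + br (br b c) a + br (br c a) b) = 0"
    by (simp add: algebra_simps)
  then show ?thesis by (simp only: neg_equal_0_iff_equal)
qed

lemma G:
  assumes Sadd: "\<And>x y. S (x + y) = S x + S y"
    and Sscl: "\<And>r x. S (scale r x) = scale r (S x)"
  shows "lie_algebra scale (bracketS scale br S) \<longleftrightarrow>
    (\<forall>x y z. br (BS br S x y) z + br (BS br S y z) x + br (BS br S z x) y = 0)"
proof -
  have Sneg: "S (- x) = - S x" for x
    using Sscl[of "-1" x] by simp
  have Sdiff: "S (x - y) = S x - S y" for x y
    by (simp only: diff_conv_add_uminus Sadd Sneg)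
  define Q where "Q x y = br (S x) y + br x (S y)" for x y
  have bS: "bracketS scale br S x y = scale (1/2) (Q x y)" for x y
    unfolding bracketS_def Q_def by simp
  have bSS: "bracketS scale br S (bracketS scale br S x y) z
      = scale (1/4) (br (S (Q x y)) z + br (br (S x) y) (S z) + br (br x (S y)) (S z))" for x y z
    unfolding bS by (simp add: Q_def Sadd Sscl brs scale_right_distrib add.assoc)
  have key: "(br (S (Q x y)) z + br (br (S x) y) (S z) + br (br x (S y)) (S z))
     + (br (S (Q y z)) x + br (br (S y) z) (S x) + br (br y (S z)) (S x))
     + (br (S (Q z x)) y + br (br (S z) x) (S y) + br (br z (S x)) (S y))
     = - (br (BS br S x y) z + br (BS br S y z) x + br (BS br S z x) y)" for x y z
  proof -
    have bsz: "br (BS br S a b) c = br (br (S a) (S b)) c - br (S (Q a b)) c" for a b c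
      by (simp only: BS_def Q_def diffL)
    have j1: "br (br (S x) (S y)) z + br (br (S y) z) (S x) + br (br z (S x)) (S y) = 0" by (rule jac2)
    have j2: "br (br (S y) (S z)) x + br (br (S z) x) (S y) + br (br x (S y)) (S z) = 0" by (rule jac2)
    have j3: "br (br (S z) (S x)) y + br (br (S x) y) (S z) + br (br y (S z)) (S x) = 0" by (rule jac2)
    have "(br (S (Q x y)) z + br (br (S x) y) (S z) + br (br x (S y)) (S z))
     + (br (S (Q y z)) x + br (br (S y) z) (S x) + br (br y (S z)) (S x))
     + (br (S (Q z x)) y + br (br (S z) x) (S y) + br (br z (S x)) (S y))
     + (br (BS br S x y) z + br (BS br S y z) x + br (BS br S z x) y)
     = (br (br (S x) (S y)) z + br (br (S y) z) (S x) + br (br z (S x)) (S y))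
       + (br (br (S y) (S z)) x + br (br (S z) x) (S y) + br (br x (S y)) (S z))
       + (br (br (S z) (S x)) y + br (br (S x) y) (S z) + br (br y (S z)) (S x))"
      by (simp only: bsz) (simp add: algebra_simps)
    also have "\<dots> = 0" using j1 j2 j3 by simp
    finally show ?thesis by (simp only: eq_neg_iff_add_eq_0)
  qed
  have inj: "scale (1/4) v = 0 \<longleftrightarrow> v = 0" for v
    using scale_scale[of 4 "1/4" v] by auto
  have jacS: "(bracketS scale br S x (bracketS scale br S y z) + bracketS scale br S y (bracketS scale br S z x)
        + bracketS scale br S z (bracketS scale br S x y) = 0)
     \<longleftrightarrow> (br (BS br S x y) z + br (BS br S y z) x + br (BS br S z x) y = 0)" for x y z
  proof -
    have as: "bracketS scale br S a b = - bracketS scale br S b a" for a b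
    proof -
      have "br (S a) b + br a (S b) = - (br (S b) a + br b (S a))"
        using antisym[of "S a" b] antisym[of a "S b"] by (simp add: algebra_simps)
      then show ?thesis by (simp only: bS Q_def scale_minus_right)
    qed
    have "bracketS scale br S x (bracketS scale br S y z) + bracketS scale br S y (bracketS scale br S z x)
        + bracketS scale br S z (bracketS scale br S x y)
      = - (bracketS scale br S (bracketS scale br S x y) z + bracketS scale br S (bracketS scale br S y z) x
        + bracketS scale br S (bracketS scale br S z x) y)"
      using as[of x "bracketS scale br S y z"] as[of y "bracketS scale br S z x"] as[of z "bracketS scale br S x y"]
      by (simp add: algebra_simps)
    also have "\<dots> = - scale (1/4) (- (br (BS br S x y) z + br (BS br S y z) x + br (BS br S z x) y))"
      unfolding bSS key[symmetric] by (simp add: scale_right_distrib)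
    finally show ?thesis by (simp only: scale_minus_right minus_minus inj)
  qed
  have lin: "(\<forall>y. Vector_Spaces.linear scale scale (\<lambda>x. bracketS scale br S x y)) \<and>
     (\<forall>x. Vector_Spaces.linear scale scale (\<lambda>y. bracketS scale br S x y))"
    unfolding Vector_Spaces.linear_iff using vector_space_axioms
    by (simp add: bS Q_def Sadd Sscl brs scale_right_distrib algebra_simps)
  have altS: "bracketS scale br S x x = 0" for x
    unfolding bS Q_def using antisym[of x "S x"] by simp
  show ?thesis
    unfolding lie_algebra_def using vector_space_axioms lin altS jacS by blast
qed


lemma vs_prod: "vector_space (prod_scale scale)"
  unfolding vector_space_def prod_scale_def
  by (auto simp: prod_eq_iff scale_right_distrib scale_left_distrib)

lemma LA_prod: "LA (prod_scale scale) (prod_br br)"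
  unfolding LA_def LA_axioms_def using vs_prod
  by (auto simp: prod_eq_iff prod_br_def prod_scale_def brs alt jac)

context
  fixes R :: "'a \<Rightarrow> 'a" and c :: 'k
  assumes Radd: "\<And>x y. R (x + y) = R x + R y"
    and Rscl: "\<And>r x. R (scale r x) = scale r (R x)"
begin

lemma Rneg: "R (- x) = - R x"
  using Rscl[of "-1" x] by (simp only: sm1)
lemma Rdiff: "R (x - y) = R x - R y"
  by (simp only: diff_conv_add_uminus Radd Rneg)

lemma cadd: "calR scale R c (X + Y) = calR scale R c X + calR scale R c Y"
  unfolding calR_def by (simp add: prod_eq_iff Radd Rdiff scale_right_distrib algebra_simps)

lemma cscl: "calR scale R c (prod_scale scale r X) = prod_scale scale r (calR scale R c X)"
  unfolding calR_def prod_scale_def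
  by (simp add: prod_eq_iff Rscl Rdiff scale_right_distrib scale_right_diff_distrib algebra_simps)

lemma prodBS: "BS (prod_br br) (calR scale R c) (x1,x2) (y1,y2) =
   (BS br R (x1-x2) (y1-y2) + scale (c^2) (br (x1-x2) (y1-y2)) - scale (c^2) (br x1 y1),
    BS br R (x1-x2) (y1-y2) + scale (c^2) (br (x1-x2) (y1-y2)) - scale (c^2) (br x2 y2))"
  unfolding BS_def calR_def prod_br_def
  by (simp add: prod_eq_iff Radd Rdiff Rscl brs power2_eq_square scale_right_distrib scale_right_diff_distrib algebra_simps)


lemma main: "is_R_matrix (prod_scale scale) (prod_br br) (calR scale R c) \<longleftrightarrow>
   (\<forall>x y. BS br R x y + scale (c^2) (br x y) \<in> lie_center br)"
proof -
  interpret P: LA "prod_scale scale" "prod_br br" by (rule LA_prod)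
  have "is_R_matrix (prod_scale scale) (prod_br br) (calR scale R c) \<longleftrightarrow>
    (\<forall>X Y Z. prod_br br (BS (prod_br br) (calR scale R c) X Y) Z
       + prod_br br (BS (prod_br br) (calR scale R c) Y Z) X
       + prod_br br (BS (prod_br br) (calR scale R c) Z X) Y = 0)"
    unfolding is_R_matrix_def by (rule P.G[OF cadd cscl])
  also have "\<dots> \<longleftrightarrow> (\<forall>x y. BS br R x y + scale (c^2) (br x y) \<in> lie_center br)"
  proof
    assume H: "\<forall>X Y Z. prod_br br (BS (prod_br br) (calR scale R c) X Y) Z
       + prod_br br (BS (prod_br br) (calR scale R c) Y Z) X
       + prod_br br (BS (prod_br br) (calR scale R c) Z X) Y = 0"
    show "\<forall>x y. BS br R x y + scale (c^2) (br x y) \<in> lie_center br"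
    proof (intro allI)
      fix x y
      show "BS br R x y + scale (c^2) (br x y) \<in> lie_center br"
        unfolding lie_center_def
      proof (rule CollectI, rule allI)
        fix z
        have "snd (prod_br br (BS (prod_br br) (calR scale R c) (x,0) (y,0)) (0,z)
          + prod_br br (BS (prod_br br) (calR scale R c) (y,0) (0,z)) (x,0)
          + prod_br br (BS (prod_br br) (calR scale R c) (0,z) (x,0)) (y,0)) = 0"
          using H by simp
        then show "br (BS br R x y + scale (c^2) (br x y)) z = 0"
          by (simp only: prodBS prod_br_def snd_conv snd_add zeroL zeroR diff_zero add_0_right scale_zero_right)
      qed
    qed
  next
    assume H: "\<forall>x y. BS br R x y + scale (c^2) (br x y) \<in> lie_center br"
    then have hz: "br (BS br R a b + scale (c^2) (br a b)) z = 0" for a b z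
      unfolding lie_center_def by blast
    have hz2: "br (BS br R a b + scale (c^2) (br a b) - scale (c^2) (br p q)) z = - scale (c^2) (br (br p q) z)" for a b p q z
      by (simp only: diffL hz sclL diff_0)
    have jj: "scale (c^2) (br (br a b) d) + scale (c^2) (br (br b d) a) + scale (c^2) (br (br d a) b) = 0"
      for a b d
      using jac2[of a b d] by (metis scale_right_distrib scale_zero_right)
    show "\<forall>X Y Z. prod_br br (BS (prod_br br) (calR scale R c) X Y) Z
       + prod_br br (BS (prod_br br) (calR scale R c) Y Z) X
       + prod_br br (BS (prod_br br) (calR scale R c) Z X) Y = 0"
    proof (intro allI)
      fix X Y Z :: "'a \<times> 'a"
      obtain x1 x2 where X: "X = (x1,x2)" by fastforce
      obtain y1 y2 where Y: "Y = (y1,y2)" by fastforce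
      obtain z1 z2 where Z: "Z = (z1,z2)" by fastforce
      have e1: "- scale (c^2) (br (br x1 y1) z1) + - scale (c^2) (br (br y1 z1) x1) + - scale (c^2) (br (br z1 x1) y1) = 0"
      proof -
        have "- scale (c^2) (br (br x1 y1) z1) + - scale (c^2) (br (br y1 z1) x1) + - scale (c^2) (br (br z1 x1) y1)
          = - (scale (c^2) (br (br x1 y1) z1) + scale (c^2) (br (br y1 z1) x1) + scale (c^2) (br (br z1 x1) y1))"
          by (simp only: diff_conv_add_uminus minus_add_distrib)
        also have "\<dots> = 0" using jj[of x1 y1 z1] by (simp only: neg_equal_0_iff_equal)
        finally show ?thesis .
      qed
      have e2: "- scale (c^2) (br (br x2 y2) z2) + - scale (c^2) (br (br y2 z2) x2) + - scale (c^2) (br (br z2 x2) y2) = 0"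
      proof -
        have "- scale (c^2) (br (br x2 y2) z2) + - scale (c^2) (br (br y2 z2) x2) + - scale (c^2) (br (br z2 x2) y2)
          = - (scale (c^2) (br (br x2 y2) z2) + scale (c^2) (br (br y2 z2) x2) + scale (c^2) (br (br z2 x2) y2))"
          by (simp only: diff_conv_add_uminus minus_add_distrib)
        also have "\<dots> = 0" using jj[of x2 y2 z2] by (simp only: neg_equal_0_iff_equal)
        finally show ?thesis .
      qed
      show "prod_br br (BS (prod_br br) (calR scale R c) X Y) Z
       + prod_br br (BS (prod_br br) (calR scale R c) Y Z) X
       + prod_br br (BS (prod_br br) (calR scale R c) Z X) Y = 0"
        unfolding X Y Z prodBS prod_br_def
        by (simp only: hz2 prod_eq_iff fst_conv snd_conv fst_add snd_add e1 e2 fst_zero snd_zero)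
    qed
  qed
  finally show ?thesis .
qed

end

end


lemma mainG:
  fixes scale :: "'k::field_char_0 \<Rightarrow> 'a::ab_group_add \<Rightarrow> 'a"
  assumes "lie_algebra scale br" "Vector_Spaces.linear scale scale R"
  shows "is_R_matrix (prod_scale scale) (prod_br br) (calR scale R c) \<longleftrightarrow>
     (\<forall>x y. BS br R x y + scale (c^2) (br x y) \<in> lie_center br)"
proof -
  interpret LA scale br using assms(1) LA_iff by blast
  have Radd: "\<And>x y. R (x + y) = R x + R y" and Rscl: "\<And>r x. R (scale r x) = scale r (R x)"
    using assms(2) unfolding Vector_Spaces.linear_iff by auto
  show ?thesis by (rule main[OF Radd Rscl])
qed

lemma center_zero:
  fixes scale :: "'k::field_char_0 \<Rightarrow> 'a::ab_group_add \<Rightarrow> 'a"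
  assumes ss: "semisimple scale br"
  shows "lie_center br = {0}"
proof -
  have la: "lie_algebra scale br"
    and I: "\<And>I. lie_ideal scale br I \<Longrightarrow> lie_solvable scale br I \<Longrightarrow> I = {0}"
    using ss unfolding semisimple_def by blast+
  interpret LA scale br using la LA_iff by blast
  have z0: "0 \<in> lie_center br" unfolding lie_center_def by simp
  have brz: "br x y = 0" if "y \<in> lie_center br" for x y
    using that antisym[of x y] unfolding lie_center_def by simp
  have sub: "subspace (lie_center br)"
    unfolding subspace_def lie_center_def by (simp add: addL sclL)
  have ideal: "lie_ideal scale br (lie_center br)"
    unfolding lie_ideal_def using sub brz z0 by metis
  have "{br x y | x y. x \<in> lie_center br \<and> y \<in> lie_center br} = {0}"
  proof (rule set_eqI)
    fix v
    show "v \<in> {br x y | x y. x \<in> lie_center br \<and> y \<in> lie_center br} \<longleftrightarrow> v \<in> {0}"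
    proof
      assume "v \<in> {br x y | x y. x \<in> lie_center br \<and> y \<in> lie_center br}"
      then obtain x y where "v = br x y" "y \<in> lie_center br" by blast
      then show "v \<in> {0}" using brz by simp
    next
      assume "v \<in> {0}"
      then have "v = br 0 0" by simp
      then show "v \<in> {br x y | x y. x \<in> lie_center br \<and> y \<in> lie_center br}" using z0 by blast
    qed
  qed
  then have "derived_series scale br (lie_center br) (Suc 0) = {0}"
    by (simp add: span_empty)
  then have "lie_solvable scale br (lie_center br)"
    unfolding lie_solvable_def by blast
  then show ?thesis using I ideal by blast
qed

lemma mainSS:
  fixes scale :: "'k::field_char_0 \<Rightarrow> 'a::ab_group_add \<Rightarrow> 'a"
  assumes ss: "semisimple scale br" and lin: "Vector_Spaces.linear scale scale R"
  shows "is_R_matrix (prod_scale scale) (prod_br br) (calR scale R c) \<longleftrightarrow> mCYBE scale br R c"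
proof -
  have la: "lie_algebra scale br" using ss unfolding semisimple_def by blast
  interpret LA scale br using la LA_iff by blast
  have "(BS br R x y + scale (c^2) (br x y) \<in> lie_center br) \<longleftrightarrow>
        BS br R x y = scale (- (c^2)) (br x y)" for x y
    unfolding center_zero[OF ss] by (simp add: eq_neg_iff_add_eq_0)
  then show ?thesis unfolding mCYBE_def mainG[OF la lin] by blast
qed

theorem proposition2p1:
  shows "(\<forall>(scale :: real \<Rightarrow> 'a::ab_group_add \<Rightarrow> 'a) br R c.
            lie_algebra scale br \<longrightarrow> Vector_Spaces.linear scale scale R \<longrightarrow>
            (is_R_matrix (prod_scale scale) (prod_br br) (calR scale R c) \<longleftrightarrow>
             (\<forall>x y. BS br R x y + scale (c^2) (br x y) \<in> lie_center br)))
       \<and> (\<forall>(scale :: complex \<Rightarrow> 'b::ab_group_add \<Rightarrow> 'b) br R c.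
            lie_algebra scale br \<longrightarrow> Vector_Spaces.linear scale scale R \<longrightarrow>
            (is_R_matrix (prod_scale scale) (prod_br br) (calR scale R c) \<longleftrightarrow>
             (\<forall>x y. BS br R x y + scale (c^2) (br x y) \<in> lie_center br)))
       \<and> (\<forall>(scale :: complex \<Rightarrow> 'c::ab_group_add \<Rightarrow> 'c) br R c.
            semisimple scale br \<longrightarrow> Vector_Spaces.linear scale scale R \<longrightarrow>
            (is_R_matrix (prod_scale scale) (prod_br br) (calR scale R c) \<longleftrightarrow>
             mCYBE scale br R c))"
  by (intro conjI allI impI mainG mainSS)

end
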